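(* Let $m,b\ge1$, let $\mathbf M$ be an invertible $\mathbb{F}_{2^m}$-linear map of $(\mathbb{F}_{2^m})^b$ (i.e. $\mathbf M\in\mathrm{GL}((\mathbb{F}_{2^m})^b)$) of order $t$, regard $V=(\mathbb{F}_{2^m})^b$ as $(\mathbb{F}_2)^{mb}$, and define $\alpha:V\to(\mathbb{F}_2)^{2^m bt}$ by $\alpha(v)=(\varepsilon(v),\varepsilon(\mathbf Mv),\dots,\varepsilon(\mathbf M^{t-1}v))$. Then $\dim_{\mathbb{F}_2}\langle\alpha(V)\rangle\le 2^m bt-(bt-1)-mb(t-1)$.
   Context: Identify $(\mathbb{F}_2)^m$ with $\mathbb{F}_{2^m}=\mathbb{F}_2[x]/(p)$ for a primitive polynomial $p$ of degree $m$, with primitive element $\gamma$ (a root of $p$). Let $e_1,\dots,e_{2^m}$ be the standard basis of $(\mathbb{F}_2)^{2^m}$ and define $\varepsilon':\mathbb{F}_{2^m}\to(\mathbb{F}_2)^{2^m}$ by $\varepsilon'(0)=e_1$, $\varepsilon'(\gamma^i)=e_{i+1}$ for $1\le i\le2^m-1$. For $v=(v_1,\dots,v_b)\in(\mathbb{F}_{2^m})^b$ set $\varepsilon(v)=(\varepsilon'(v_1),\dots,\varepsilon'(v_b))\in(\mathbb{F}_2)^{2^m b}$. $\langle S\rangle$ denotes the $\mathbb{F}_2$-linear span. *)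

theory Defs
  imports "HOL-Library.Z2" "HOL-Computational_Algebra.Polynomial_Factorial" "HOL-Library.Function_Algebras"
begin

text \<open>GF(2) is the type bit. GF(2^m) is modelled as F_2[x]/(p): polynomials over bit of
  degree < deg p, with multiplication modulo p. The primitive element gamma is the class of x.\<close>

definition primitive_poly :: "nat \<Rightarrow> bit poly \<Rightarrow> bool" where
  "primitive_poly m p \<longleftrightarrow> degree p = m \<and> irreducible p \<and>
     [:0, 1:] ^ (2 ^ m - 1) mod p = 1 \<and>
     (\<forall>i. 1 \<le> i \<and> i < 2 ^ m - 1 \<longrightarrow> [:0, 1:] ^ i mod p \<noteq> 1)"

definition gf_elems :: "bit poly \<Rightarrow> bit poly set" where
  "gf_elems p = {q. q mod p = q}"

definition gf_vecs :: "bit poly \<Rightarrow> nat \<Rightarrow> (nat \<Rightarrow> bit poly) set" where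
  "gf_vecs p b = {v. (\<forall>i<b. v i \<in> gf_elems p) \<and> (\<forall>i\<ge>b. v i = 0)}"

definition gf_smult :: "bit poly \<Rightarrow> bit poly \<Rightarrow> (nat \<Rightarrow> bit poly) \<Rightarrow> (nat \<Rightarrow> bit poly)" where
  "gf_smult p c v = (\<lambda>i. (c * v i) mod p)"

text \<open>0-based position of the 1 in eps'(x): 0 for x = 0, and i for x = gamma^i, 1 <= i <= 2^m-1.\<close>
definition eps_idx :: "bit poly \<Rightarrow> bit poly \<Rightarrow> nat" where
  "eps_idx p x = (if x = 0 then 0 else (LEAST i. 1 \<le> i \<and> [:0, 1:] ^ i mod p = x))"

definition eps_vec :: "bit poly \<Rightarrow> nat \<Rightarrow> nat \<Rightarrow> (nat \<Rightarrow> bit poly) \<Rightarrow> (nat \<Rightarrow> bit)" where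
  "eps_vec p m b v = (\<lambda>n. if \<exists>j<b. n = j * 2 ^ m + eps_idx p (v j) then 1 else 0)"

definition alpha_map :: "bit poly \<Rightarrow> nat \<Rightarrow> nat \<Rightarrow> nat \<Rightarrow> ((nat \<Rightarrow> bit poly) \<Rightarrow> (nat \<Rightarrow> bit poly))
    \<Rightarrow> (nat \<Rightarrow> bit poly) \<Rightarrow> (nat \<Rightarrow> bit)" where
  "alpha_map p m b t M v = (\<lambda>n. if n < 2 ^ m * b * t
      then eps_vec p m b ((M ^^ (n div (2 ^ m * b))) v) (n mod (2 ^ m * b)) else 0)"

definition bscale :: "bit \<Rightarrow> (nat \<Rightarrow> bit) \<Rightarrow> (nat \<Rightarrow> bit)" where
  "bscale c f = (\<lambda>i. c * f i)"

end

theory Submission imports Defs begin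


lemma bit_UNIV: "(UNIV :: bit set) = {0, 1}"
  by (auto intro: bit.exhaust)

lemma gf_elems_iff:
  assumes "degree p \<ge> 1"
  shows "x \<in> gf_elems p \<longleftrightarrow> (x = 0 \<or> degree x < degree p)"
proof
  assume "x \<in> gf_elems p"
  then have "x mod p = x" by (simp add: gf_elems_def)
  moreover have "p \<noteq> 0" using assms by auto
  ultimately show "x = 0 \<or> degree x < degree p"
    by (metis degree_mod_less)
next
  assume "x = 0 \<or> degree x < degree p"
  then show "x \<in> gf_elems p" by (auto simp: gf_elems_def mod_poly_less)
qed

lemma gf_elems_mod: "x mod p \<in> gf_elems p"
  by (simp add: gf_elems_def)

lemma gf_elems_card:
  assumes "degree p = m" "m \<ge> 1"
  shows "finite (gf_elems p) \<and> card (gf_elems p) \<le> 2 ^ m"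
proof -
  have sub: "gf_elems p \<subseteq> Poly ` {xs. set xs \<subseteq> UNIV \<and> length xs = m}"
  proof
    fix x assume "x \<in> gf_elems p"
    then have x: "x = 0 \<or> degree x < m" using gf_elems_iff assms by auto
    have len: "length (coeffs x) \<le> m"
      using x by (cases "x = 0") (auto simp: length_coeffs_degree)
    have "x = Poly (coeffs x @ replicate (m - length (coeffs x)) 0)"
      by (simp add: Poly_append_replicate_zero)
    moreover have "length (coeffs x @ replicate (m - length (coeffs x)) 0) = m"
      using len by simp
    ultimately show "x \<in> Poly ` {xs. set xs \<subseteq> UNIV \<and> length xs = m}" by blast
  qed
  have fin: "finite {xs::bit list. set xs \<subseteq> UNIV \<and> length xs = m}"
    by (rule finite_lists_length_eq) (simp add: bit_UNIV)
  have c: "card {xs::bit list. set xs \<subseteq> UNIV \<and> length xs = m} = 2 ^ m"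
    by (subst card_lists_length_eq) (simp_all add: bit_UNIV numeral_2_eq_2)
  show ?thesis
    using sub fin c card_image_le[OF fin, of Poly] card_mono[OF finite_imageI[OF fin] sub]
      finite_subset[OF sub finite_imageI[OF fin]] by auto
qed

definition gam :: "bit poly \<Rightarrow> nat \<Rightarrow> bit poly" where
  "gam p i = [:0, 1:] ^ i mod p"

lemma gam_nonzero:
  assumes "primitive_poly m p" "m \<ge> 1" "i \<le> 2 ^ m - 1"
  shows "gam p i \<noteq> 0"
proof
  assume h: "gam p i = 0"
  have e: "(2::nat) ^ m - 1 = i + (2 ^ m - 1 - i)" using assms(3) by simp
  have "[:0, 1:] ^ (2 ^ m - 1) = [:0, 1:] ^ i * [:0, 1::bit:] ^ (2 ^ m - 1 - i)"
    by (metis e power_add)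
  then have "[:0, 1:] ^ (2 ^ m - 1) mod p = ([:0, 1:] ^ i mod p * [:0, 1::bit:] ^ (2 ^ m - 1 - i)) mod p"
    by (simp only: mod_mult_left_eq)
  also have "\<dots> = 0" using h unfolding gam_def by simp
  finally have "[:0, 1:] ^ (2 ^ m - 1) mod p = (0 :: bit poly)" .
  moreover have "[:0, 1:] ^ (2 ^ m - 1) mod p = (1 :: bit poly)"
    using assms(1) unfolding primitive_poly_def by blast
  ultimately show False by simp
qed

lemma gam_inj:
  assumes "primitive_poly m p" "m \<ge> 1"
  shows "inj_on (gam p) {1..<2 ^ m}"
proof -
  have key: "False" if "1 \<le> i" "i < j" "j < 2 ^ m" "gam p i = gam p j" for i j
  proof -
    let ?x = "[:0, 1::bit:]"
    have "(?x ^ i * ?x ^ (2 ^ m - 1 - j)) mod p = (?x ^ j * ?x ^ (2 ^ m - 1 - j)) mod p"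
      using that(4) unfolding gam_def by (metis mod_mult_cong mod_mod_trivial)
    moreover have "?x ^ j * ?x ^ (2 ^ m - 1 - j) = ?x ^ (2 ^ m - 1)"
      using that by (simp flip: power_add)
    moreover have "?x ^ i * ?x ^ (2 ^ m - 1 - j) = ?x ^ (i + (2 ^ m - 1 - j))"
      by (simp add: power_add)
    ultimately have "?x ^ (i + (2 ^ m - 1 - j)) mod p = 1"
      using assms(1) by (simp add: primitive_poly_def)
    moreover have "1 \<le> i + (2 ^ m - 1 - j)" "i + (2 ^ m - 1 - j) < 2 ^ m - 1"
      using that by auto
    ultimately show False using assms(1) unfolding primitive_poly_def by blast
  qed
  show ?thesis
    unfolding inj_on_def
  proof (intro ballI impI)
    fix i j assume i: "i \<in> {1..<2 ^ m}" and j: "j \<in> {1..<2 ^ m}" and e: "gam p i = gam p j"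
    show "i = j"
    proof (rule ccontr)
      assume "i \<noteq> j"
      then consider "i < j" | "j < i" by linarith
      then show False
      proof cases
        case 1 then show False using key[of i j] i j e by auto
      next
        case 2 then show False using key[of j i] i j e by auto
      qed
    qed
  qed
qed

lemma dlog_exists:
  assumes "primitive_poly m p" "m \<ge> 1" "x \<in> gf_elems p" "x \<noteq> 0"
  shows "\<exists>i. 1 \<le> i \<and> i < 2 ^ m \<and> gam p i = x"
proof -
  have dp: "degree p = m" using assms(1) by (simp add: primitive_poly_def)
  obtain fin: "finite (gf_elems p)" and cd: "card (gf_elems p) \<le> 2 ^ m"
    using gf_elems_card[OF dp assms(2)] by auto
  let ?G = "gam p ` {1..<2 ^ m}"
  have sub: "?G \<subseteq> gf_elems p - {0}"
  proof
    fix y assume "y \<in> ?G"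
    then obtain i where i: "i \<in> {1..<2 ^ m}" "y = gam p i" by auto
    have "gam p i \<noteq> 0" using i(1) by (intro gam_nonzero[OF assms(1,2)]) auto
    moreover have "gam p i \<in> gf_elems p" unfolding gam_def by (rule gf_elems_mod)
    ultimately show "y \<in> gf_elems p - {0}" using i by auto
  qed
  have cG: "card ?G = 2 ^ m - 1"
    using card_image[OF gam_inj[OF assms(1,2)]] by simp
  have z: "0 \<in> gf_elems p" by (simp add: gf_elems_def)
  have "card (gf_elems p - {0}) \<le> 2 ^ m - 1"
    using cd z fin by (simp add: card_Diff_singleton)
  then have "?G = gf_elems p - {0}"
    using card_subset_eq[OF finite_Diff[OF fin] sub] cG card_mono[OF finite_Diff[OF fin] sub] by linarith
  then have "x \<in> ?G" using assms(3,4) by auto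
  then show ?thesis by force
qed

definition Lf :: "bit poly \<Rightarrow> nat \<Rightarrow> bit poly" where
  "Lf p s = (if s = 0 then 0 else gam p s)"

lemma eps_idx_props:
  assumes "primitive_poly m p" "m \<ge> 1" "x \<in> gf_elems p"
  shows "eps_idx p x < 2 ^ m \<and> Lf p (eps_idx p x) = x"
proof (cases "x = 0")
  case True
  then show ?thesis by (simp add: eps_idx_def Lf_def)
next
  case False
  obtain i where i: "1 \<le> i" "i < 2 ^ m" "gam p i = x"
    using dlog_exists[OF assms False] by auto
  have e: "eps_idx p x = (LEAST i. 1 \<le> i \<and> gam p i = x)"
    using False by (simp add: eps_idx_def gam_def)
  have "1 \<le> eps_idx p x \<and> gam p (eps_idx p x) = x"
    unfolding e by (rule LeastI[of _ i]) (use i in auto)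
  moreover have "eps_idx p x \<le> i"
    unfolding e by (rule Least_le) (use i in auto)
  ultimately show ?thesis using i by (auto simp: Lf_def)
qed

lemma Lf_elem: "Lf p s \<in> gf_elems p"
  by (simp add: Lf_def gam_def gf_elems_def)

definition bidx :: "nat \<Rightarrow> nat \<Rightarrow> nat" where
  "bidx m i = (if i = 0 then 2 ^ m - 1 else i)"

lemma Lf_bidx:
  assumes "primitive_poly m p" "m \<ge> 1" "i < m"
  shows "Lf p (bidx m i) = monom 1 i"
proof (cases "i = 0")
  case True
  have "m < 2 ^ m" by (rule less_exp)
  then have "(2::nat) ^ m - 1 \<noteq> 0" using assms(2) by linarith
  then show ?thesis using True assms(1)
    by (simp add: bidx_def Lf_def gam_def primitive_poly_def monom_altdef)
next
  case False
  have "degree ([:0, 1::bit:] ^ i) < degree p"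
    using assms by (simp add: degree_linear_power primitive_poly_def)
  then show ?thesis using False
    by (simp add: bidx_def Lf_def gam_def mod_poly_less monom_altdef)
qed

lemma bidx_inj: "inj_on (bidx m) {..<m}"
proof -
  have "m < 2 ^ m" by (rule less_exp)
  then show ?thesis unfolding inj_on_def bidx_def by (auto; linarith)
qed

lemma bidx_range: "m \<ge> 1 \<Longrightarrow> i < m \<Longrightarrow> 1 \<le> bidx m i \<and> bidx m i < 2 ^ m"
proof -
  assume "m \<ge> 1" "i < m"
  moreover have "m < 2 ^ m" by (rule less_exp)
  ultimately show ?thesis unfolding bidx_def by (auto; linarith)
qed




lemma sum_fun_apply: "(sum f A :: nat \<Rightarrow> bit) x = (\<Sum>a\<in>A. f a x)"
  by (induct A rule: infinite_finite_induct) auto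

interpretation bvs: vector_space bscale
  by unfold_locales (auto simp: bscale_def fun_eq_iff algebra_simps)

lemma dim_inj_image:
  assumes lf: "Vector_Spaces.linear bscale bscale f" and fi: "inj_on f (bvs.span S)"
  shows "bvs.dim (f ` S) = bvs.dim S"
proof -
  interpret lf: Vector_Spaces.linear bscale bscale f by fact
  obtain B where B: "B \<subseteq> S" "bvs.independent B" "S \<subseteq> bvs.span B" "card B = bvs.dim S"
    using bvs.basis_exists[of S] by auto
  then have "bvs.span S = bvs.span B"
    using bvs.span_mono[of B S] bvs.span_mono[of S "bvs.span B"] bvs.span_span[of B] by auto
  moreover have "card (f ` B) = card B"
    using assms card_image[of f B] inj_on_subset[of f "bvs.span S" B] B bvs.span_superset by auto
  moreover have "(f ` B) \<subseteq> (f ` S)"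
    using B by auto
  ultimately show ?thesis
    by (metis B(2) B(4) fi lf.dependent_inj_imageD lf.span_image bvs.dim_eq_card_independent bvs.dim_span)
qed

lemma arith_div:
  fixes Q b k j s :: nat
  assumes "j < b" "s < Q"
  shows "(k * (Q * b) + j * Q + s) div (Q * b) = k"
    "(k * (Q * b) + j * Q + s) mod (Q * b) = j * Q + s"
    "(k * (Q * b) + j * Q + s) mod Q = s"
    "j * Q + s < Q * b"
proof -
  have lt: "j * Q + s < Q * b"
  proof -
    have "j * Q + s < (j + 1) * Q" using assms by simp
    also have "\<dots> \<le> b * Q" using assms by (intro mult_right_mono) auto
    finally show ?thesis by (simp add: mult.commute)
  qed
  show "j * Q + s < Q * b" by (fact lt)
  have e: "k * (Q * b) + j * Q + s = (j * Q + s) + k * (Q * b)" by simp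
  have qb: "Q * b > 0" using lt by linarith
  show "(k * (Q * b) + j * Q + s) div (Q * b) = k"
    unfolding e using lt qb by simp
  show "(k * (Q * b) + j * Q + s) mod (Q * b) = j * Q + s"
    unfolding e using lt qb by simp
  have e2: "k * (Q * b) + j * Q + s = s + (k * b + j) * Q" by (simp add: algebra_simps)
  show "(k * (Q * b) + j * Q + s) mod Q = s"
    unfolding e2 using assms by simp
qed

lemma arith_lt:
  fixes Q b k j s t :: nat
  assumes "k < t" "j < b" "s < Q"
  shows "k * (Q * b) + j * Q + s < Q * b * t"
proof -
  have "k * (Q * b) + j * Q + s < k * (Q * b) + Q * b" using arith_div(4)[OF assms(2,3)] by simp
  also have "\<dots> = (k + 1) * (Q * b)" by simp
  also have "\<dots> \<le> t * (Q * b)" using assms(1) by (intro mult_right_mono) auto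
  finally show ?thesis by (simp add: mult.commute)
qed

lemma arith_decomp:
  fixes Q b n t :: nat
  assumes "n < Q * b * t" "Q > 0"
  shows "n = (n div (Q * b)) * (Q * b) + ((n mod (Q * b)) div Q) * Q + n mod Q"
    "n div (Q * b) < t" "(n mod (Q * b)) div Q < b" "n mod Q < Q"
proof -
  have qb: "Q * b > 0" using assms by (cases "Q * b") auto
  have mm: "(n mod (Q * b)) mod Q = n mod Q"
    by (simp add: mod_mod_cancel)
  have e1: "n mod (Q * b) = (n mod (Q * b)) div Q * Q + (n mod (Q * b)) mod Q"
    by (rule div_mult_mod_eq[symmetric])
  have e2: "n = n div (Q * b) * (Q * b) + n mod (Q * b)"
    by (rule div_mult_mod_eq[symmetric])
  show "n = (n div (Q * b)) * (Q * b) + ((n mod (Q * b)) div Q) * Q + n mod Q"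
    using e1 e2 mm by linarith
  show "n div (Q * b) < t"
    by (rule less_mult_imp_div_less) (use assms(1) in \<open>simp add: mult.commute\<close>)
  have "n mod (Q * b) < b * Q" using qb by (simp add: mult.commute)
  then show "(n mod (Q * b)) div Q < b"
    by (rule less_mult_imp_div_less)
  show "n mod Q < Q" using assms by simp
qed




locale setting =
  fixes m b t :: nat and p :: "bit poly" and M :: "(nat \<Rightarrow> bit poly) \<Rightarrow> (nat \<Rightarrow> bit poly)"
  assumes m1: "m \<ge> 1" and b1: "b \<ge> 1" and prim: "primitive_poly m p"
    and M_maps: "\<forall>v\<in>gf_vecs p b. M v \<in> gf_vecs p b"
    and M_add: "\<forall>u\<in>gf_vecs p b. \<forall>v\<in>gf_vecs p b. M (u + v) = M u + M v"
    and t1: "t \<ge> 1"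
begin

abbreviation "Q \<equiv> (2::nat) ^ m"
abbreviation "N \<equiv> Q * b * t"
abbreviation "V \<equiv> gf_vecs p b"
abbreviation "pos k j s \<equiv> k * (Q * b) + j * Q + s"

lemma zero_V: "0 \<in> V"
  by (simp add: gf_vecs_def gf_elems_def)

lemma add_V: "u \<in> V \<Longrightarrow> v \<in> V \<Longrightarrow> u + v \<in> V"
  by (auto simp: gf_vecs_def gf_elems_def poly_mod_add_left)

lemma Mpow_maps: "v \<in> V \<Longrightarrow> (M ^^ k) v \<in> V"
  by (induct k) (auto simp: M_maps)

lemma Mpow_add: "u \<in> V \<Longrightarrow> v \<in> V \<Longrightarrow> (M ^^ k) (u + v) = (M ^^ k) u + (M ^^ k) v"
  by (induct k) (auto simp: M_add Mpow_maps)

lemma Mpow_zero: "(M ^^ k) 0 = 0"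
proof -
  have "(M ^^ k) 0 = (M ^^ k) (0 + 0)" by simp
  also have "\<dots> = (M ^^ k) 0 + (M ^^ k) 0" using Mpow_add zero_V by blast
  finally show ?thesis by simp
qed

definition Dv :: "(nat \<Rightarrow> bit) \<Rightarrow> nat \<Rightarrow> nat \<Rightarrow> bit poly" where
  "Dv y k = (\<lambda>j. if j < b then \<Sum>s<Q. smult (y (pos k j s)) (Lf p s) else 0)"

definition bsum :: "(nat \<Rightarrow> bit) \<Rightarrow> nat \<Rightarrow> nat \<Rightarrow> bit" where
  "bsum y k j = (\<Sum>s<Q. y (pos k j s))"

definition Kp :: "(nat \<Rightarrow> bit) \<Rightarrow> bool" where
  "Kp y \<longleftrightarrow> (\<forall>n\<ge>N. y n = 0) \<and> (\<forall>k<t. \<forall>j<b. bsum y k j = bsum y 0 0)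
     \<and> (\<forall>k<t. Dv y k = (M ^^ k) (Dv y 0))"

lemma gf_add: "x \<in> gf_elems p \<Longrightarrow> y \<in> gf_elems p \<Longrightarrow> x + y \<in> gf_elems p"
  by (simp add: gf_elems_def poly_mod_add_left)

lemma gf_sum: "(\<And>s. s \<in> A \<Longrightarrow> f s \<in> gf_elems p) \<Longrightarrow> sum f A \<in> gf_elems p"
proof (induct A rule: infinite_finite_induct)
  case (infinite A) then show ?case by (simp add: gf_elems_def)
next
  case empty then show ?case by (simp add: gf_elems_def)
next
  case (insert x F) then show ?case by (simp add: gf_add)
qed

lemma gf_smult: "x \<in> gf_elems p \<Longrightarrow> smult c x \<in> gf_elems p"
  by (simp add: gf_elems_def mod_smult_left)

lemma Dv_V: "Dv y k \<in> V"
proof -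
  have "(\<Sum>s<Q. smult (y (pos k j s)) (Lf p s)) \<in> gf_elems p" for j
    by (intro gf_sum gf_smult Lf_elem)
  then show ?thesis by (auto simp: Dv_def gf_vecs_def)
qed

lemma Dv_add: "Dv (y + z) k = Dv y k + Dv z k"
  unfolding Dv_def fun_eq_iff plus_fun_apply smult_add_left sum.distrib by simp

lemma Dv_zero: "Dv 0 k = 0"
  by (auto simp: Dv_def fun_eq_iff)

lemma bsum_add: "bsum (y + z) k j = bsum y k j + bsum z k j"
  unfolding bsum_def plus_fun_apply sum.distrib by (rule refl)

lemma Kp_D1: "Kp y \<Longrightarrow> n \<ge> N \<Longrightarrow> y n = 0"
  unfolding Kp_def by blast
lemma Kp_D2: "Kp y \<Longrightarrow> k < t \<Longrightarrow> j < b \<Longrightarrow> bsum y k j = bsum y 0 0"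
  unfolding Kp_def by blast
lemma Kp_D3: "Kp y \<Longrightarrow> k < t \<Longrightarrow> Dv y k = (M ^^ k) (Dv y 0)"
  unfolding Kp_def by blast

lemma Kp_zero: "Kp 0"
proof -
  have "bsum 0 k j = 0" for k j unfolding bsum_def by simp
  then show ?thesis unfolding Kp_def using Dv_zero Mpow_zero by simp
qed

lemma Kp_add: assumes "Kp y" "Kp z" shows "Kp (y + z)"
proof -
  have "Dv (y + z) k = (M ^^ k) (Dv (y + z) 0)" if "k < t" for k
  proof -
    have "Dv (y + z) k = Dv y k + Dv z k" by (rule Dv_add)
    also have "\<dots> = (M ^^ k) (Dv y 0) + (M ^^ k) (Dv z 0)"
    proof -
      have "Dv y k = (M ^^ k) (Dv y 0)" "Dv z k = (M ^^ k) (Dv z 0)"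
        using assms that unfolding Kp_def by blast+
      then show ?thesis by (simp only:)
    qed
    also have "\<dots> = (M ^^ k) (Dv y 0 + Dv z 0)"
      by (rule Mpow_add[symmetric]) (rule Dv_V)+
    also have "\<dots> = (M ^^ k) (Dv (y + z) 0)" by (simp only: Dv_add)
    finally show ?thesis .
  qed
  moreover have "bsum (y + z) k j = bsum (y + z) 0 0" if "k < t" "j < b" for k j
  proof -
    have "bsum y k j = bsum y 0 0" "bsum z k j = bsum z 0 0"
      using assms that unfolding Kp_def by blast+
    then show ?thesis unfolding bsum_add by (simp only:)
  qed
  moreover have "(y + z) n = 0" if "n \<ge> N" for n
  proof -
    have "y n = 0" "z n = 0" using assms that unfolding Kp_def by blast+
    then show ?thesis by simp
  qed
  ultimately show ?thesis unfolding Kp_def by blast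
qed

lemma Kp_subspace: "bvs.subspace {y. Kp y}"
proof -
  have "Kp (bscale c y)" if "Kp y" for c y
  proof (cases c)
    case zero
    then have "bscale c y = 0" by (simp add: bscale_def fun_eq_iff)
    then show ?thesis using Kp_zero by (simp only:)
  next
    case one
    then have "bscale c y = y" by (simp add: bscale_def fun_eq_iff)
    then show ?thesis using that by (simp only:)
  qed
  then show ?thesis unfolding bvs.subspace_def using Kp_zero Kp_add by blast
qed

lemma idx_lt: "w \<in> V \<Longrightarrow> j < b \<Longrightarrow> eps_idx p (w j) < Q \<and> Lf p (eps_idx p (w j)) = w j"
  by (rule eps_idx_props[OF prim m1]) (auto simp: gf_vecs_def)

lemma alpha_pos:
  assumes v: "v \<in> V" and k: "k < t" and j: "j < b" and s: "s < Q"
  shows "alpha_map p m b t M v (pos k j s) = (if s = eps_idx p ((M ^^ k) v j) then 1 else 0)"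
proof -
  define w where "w = (M ^^ k) v"
  have w: "w \<in> V" unfolding w_def using v by (rule Mpow_maps)
  have eq: "(\<exists>j'<b. j * Q + s = j' * Q + eps_idx p (w j')) \<longleftrightarrow> s = eps_idx p (w j)"
  proof
    assume "\<exists>j'<b. j * Q + s = j' * Q + eps_idx p (w j')"
    then obtain j' where j': "j' < b" "j * Q + s = j' * Q + eps_idx p (w j')" by auto
    have lt: "eps_idx p (w j') < Q" using idx_lt[OF w j'(1)] by simp
    have "(j * Q + s) mod Q = s" using s by simp
    moreover have "(j' * Q + eps_idx p (w j')) mod Q = eps_idx p (w j')" using lt by simp
    ultimately have se: "s = eps_idx p (w j')" using j' by simp
    then have "j * Q = j' * Q" using j'(2) by simp
    then have "j = j'" by simp
    then show "s = eps_idx p (w j)" using se by simp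
  next
    assume "s = eps_idx p (w j)"
    then show "\<exists>j'<b. j * Q + s = j' * Q + eps_idx p (w j')" using j by auto
  qed
  have lt: "pos k j s < N" by (rule arith_lt[OF k j s])
  show ?thesis
    unfolding alpha_map_def eps_vec_def
    using lt arith_div(1-3)[OF j s, of k] eq by (simp add: w_def)
qed

lemma alpha_out: "n \<ge> N \<Longrightarrow> alpha_map p m b t M v n = 0"
  by (simp add: alpha_map_def)

lemma Dv_alpha:
  assumes v: "v \<in> V" and k: "k < t"
  shows "Dv (alpha_map p m b t M v) k = (M ^^ k) v"
proof
  fix j
  have w: "(M ^^ k) v \<in> V" using v by (rule Mpow_maps)
  show "Dv (alpha_map p m b t M v) k j = (M ^^ k) v j"
  proof (cases "j < b")
    case True
    have "Dv (alpha_map p m b t M v) k j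
        = (\<Sum>s<Q. smult (alpha_map p m b t M v (pos k j s)) (Lf p s))"
      by (simp add: Dv_def True)
    also have "\<dots> = (\<Sum>s<Q. if s = eps_idx p ((M ^^ k) v j) then Lf p s else 0)"
      by (rule sum.cong) (auto simp: alpha_pos[OF v k True])
    also have "\<dots> = Lf p (eps_idx p ((M ^^ k) v j))"
      using idx_lt[OF w True] by (simp add: sum.delta)
    also have "\<dots> = (M ^^ k) v j" using idx_lt[OF w True] by simp
    finally show ?thesis .
  next
    case False
    then show ?thesis using w by (simp add: Dv_def gf_vecs_def)
  qed
qed

lemma bsum_alpha:
  assumes v: "v \<in> V" and k: "k < t" and j: "j < b"
  shows "bsum (alpha_map p m b t M v) k j = 1"
proof -
  have w: "(M ^^ k) v \<in> V" using v by (rule Mpow_maps)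
  have "bsum (alpha_map p m b t M v) k j
        = (\<Sum>s<Q. if s = eps_idx p ((M ^^ k) v j) then 1 else 0)"
    unfolding bsum_def using alpha_pos[OF v k j] by (auto intro!: sum.cong)
  also have "\<dots> = 1"
    using idx_lt[OF w j] by (simp add: sum.delta)
  finally show ?thesis .
qed

lemma Kp_alpha: "v \<in> V \<Longrightarrow> Kp (alpha_map p m b t M v)"
  unfolding Kp_def using Dv_alpha[of v] bsum_alpha[of v] alpha_out t1 by auto

abbreviation "Bs \<equiv> bidx m ` {..<m}"

definition Fset :: "nat set" where
  "Fset = {n. n < N \<and> ((n mod Q \<noteq> 0 \<and> n mod Q \<notin> Bs) \<or> (n div (Q * b) = 0 \<and> n mod Q \<in> Bs) \<or> n = 0)}"

lemma Q_pos: "Q > 0" by simp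

lemma kill:
  assumes K: "Kp y" and Z: "\<forall>n\<in>Fset. y n = 0"
  shows "y = 0"
proof -
  have a: "y (pos k j s) = 0" if "k < t" "j < b" "s < Q" "s \<noteq> 0" "s \<notin> Bs" for k j s
  proof -
    have "pos k j s \<in> Fset"
      using arith_lt[OF that(1-3)] arith_div(1-3)[OF that(2,3), of k] that by (simp add: Fset_def)
    then show ?thesis using Z by blast
  qed
  have bb: "y (pos 0 j s) = 0" if "j < b" "s < Q" "s \<in> Bs" for j s
  proof -
    have "pos 0 j s \<in> Fset"
      using arith_lt[OF _ that(1,2), of 0 t] t1 arith_div(1-3)[OF that(1,2), of 0] that by (simp add: Fset_def)
    then show ?thesis using Z by blast
  qed
  have c: "Dv y 0 = 0"
  proof
    fix j
    show "Dv y 0 j = 0 j"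
    proof (cases "j < b")
      case True
      have "smult (y (pos 0 j s)) (Lf p s) = 0" if "s \<in> {..<Q}" for s
      proof -
        consider "s = 0" | "s \<in> Bs" | "s \<noteq> 0" "s \<notin> Bs" by blast
        then show ?thesis
        proof cases
          case 1 then show ?thesis by (simp add: Lf_def)
        next
          case 2 then show ?thesis using bb[OF True _ 2] that by simp
        next
          case 3 then show ?thesis using a[of 0 j s] t1 True that by simp
        qed
      qed
      then have "(\<Sum>s<Q. smult (y (pos 0 j s)) (Lf p s)) = 0"
        by (intro sum.neutral) blast
      then show ?thesis using True by (simp add: Dv_def)
    qed (simp add: Dv_def)
  qed
  have d: "Dv y k = 0" if "k < t" for k
    using Kp_D3[OF K that] c Mpow_zero by simp
  have e: "y (pos k j (bidx m i)) = 0" if k: "k < t" and j: "j < b" and i: "i < m" for k j i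
  proof -
    have g: "y (pos k j s) * coeff (Lf p s) i = (if s = bidx m i then y (pos k j (bidx m i)) else 0)"
      if s: "s \<in> {..<Q}" for s
    proof -
      consider "s = 0" | "s \<in> Bs" | "s \<noteq> 0" "s \<notin> Bs" by blast
      then show ?thesis
      proof cases
        case 1
        then have "s \<noteq> bidx m i" using bidx_range[OF m1 i] by auto
        then show ?thesis using 1 by (simp add: Lf_def)
      next
        case 2
        then obtain i' where i': "i' < m" "s = bidx m i'" by auto
        have "coeff (Lf p s) i = (if i' = i then 1 else 0)"
          using Lf_bidx[OF prim m1 i'(1)] i' by (simp add: coeff_monom)
        moreover have "s = bidx m i \<longleftrightarrow> i' = i"
          using i' i bidx_inj[of m] by (auto simp: inj_on_def)
        ultimately show ?thesis using i' by auto
      next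
        case 3
        then have "s \<noteq> bidx m i" using i by auto
        then show ?thesis using a[OF k j _ 3] s by simp
      qed
    qed
    have "0 = coeff (Dv y k j) i" using d[OF k] by simp
    also have "\<dots> = (\<Sum>s<Q. y (pos k j s) * coeff (Lf p s) i)"
      using j by (simp add: Dv_def coeff_sum)
    also have "\<dots> = (\<Sum>s<Q. if s = bidx m i then y (pos k j (bidx m i)) else 0)"
      using g by (rule sum.cong[OF refl])
    also have "\<dots> = y (pos k j (bidx m i))"
      using bidx_range[OF m1 i] by (simp add: sum.delta)
    finally show ?thesis by simp
  qed
  have f: "y (pos k j s) = 0" if "k < t" "j < b" "s < Q" "s \<noteq> 0" for k j s
    using a[OF that] e[OF that(1,2)] by blast
  have h: "bsum y k j = y (pos k j 0)" if "k < t" "j < b" for k j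
  proof -
    have "bsum y k j = (\<Sum>s<Q. if s = 0 then y (pos k j 0) else 0)"
      unfolding bsum_def using f[OF that] by (intro sum.cong) auto
    then show ?thesis by (simp add: sum.delta)
  qed
  have y0: "y 0 = 0"
  proof -
    have "0 < N" using t1 b1 by simp
    then have "0 \<in> Fset" by (simp add: Fset_def)
    then show ?thesis using Z by blast
  qed
  have g0: "y (pos k j 0) = 0" if "k < t" "j < b" for k j
  proof -
    have "y (pos k j 0) = bsum y k j" using h[OF that] by simp
    also have "\<dots> = bsum y 0 0" using Kp_D2[OF K that] by simp
    also have "\<dots> = y 0" using h[of 0 0] t1 b1 by simp
    finally show ?thesis using y0 by simp
  qed
  show "y = 0"
  proof
    fix n
    show "y n = 0 n"
    proof (cases "n < N")
      case False
      then show ?thesis using Kp_D1[OF K] by simp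
    next
      case True
      note dc = arith_decomp[OF True Q_pos]
      show ?thesis
        using f[OF dc(2,3,4)] g0[OF dc(2,3)] dc(1) by (cases "n mod Q = 0") auto
    qed
  qed
qed

lemma Fset_card: "finite Fset \<and> card Fset \<le> t * (b * (Q - 1 - m)) + b * m + 1"
proof -
  define S' where "S' = {1..<Q} - Bs"
  define f1 where "f1 = (\<lambda>(k, j, s). pos k j s)"
  define f2 where "f2 = (\<lambda>(j, s). pos 0 j s)"
  have sub: "Fset \<subseteq> f1 ` ({..<t} \<times> {..<b} \<times> S') \<union> f2 ` ({..<b} \<times> Bs) \<union> {0}"
  proof
    fix n assume n: "n \<in> Fset"
    then have nN: "n < N" by (simp add: Fset_def)
    note dc = arith_decomp[OF nN Q_pos]
    consider "n mod Q \<noteq> 0" "n mod Q \<notin> Bs" | "n div (Q * b) = 0" "n mod Q \<in> Bs" | "n = 0"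
      using n by (auto simp: Fset_def)
    then show "n \<in> f1 ` ({..<t} \<times> {..<b} \<times> S') \<union> f2 ` ({..<b} \<times> Bs) \<union> {0}"
    proof cases
      case 1
      have "n = f1 (n div (Q * b), n mod (Q * b) div Q, n mod Q)"
        using dc(1) by (simp add: f1_def)
      moreover have "(n div (Q * b), n mod (Q * b) div Q, n mod Q) \<in> {..<t} \<times> {..<b} \<times> S'"
        using dc 1 by (auto simp: S'_def)
      ultimately show ?thesis by blast
    next
      case 2
      have "n = f2 (n mod (Q * b) div Q, n mod Q)"
        using dc(1) 2 by (simp add: f2_def)
      moreover have "(n mod (Q * b) div Q, n mod Q) \<in> {..<b} \<times> Bs"
        using dc 2 by auto
      ultimately show ?thesis by blast
    next
      case 3 then show ?thesis by simp
    qed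
  qed
  have cB: "card Bs = m" using card_image[OF bidx_inj[of m]] by simp
  have BsQ: "Bs \<subseteq> {1..<Q}" using bidx_range[OF m1] by auto
  have cS: "card S' = Q - 1 - m"
    unfolding S'_def using card_Diff_subset[OF finite_imageI BsQ] cB by simp
  have fS: "finite S'" by (simp add: S'_def)
  have c1: "card (f1 ` ({..<t} \<times> {..<b} \<times> S')) \<le> t * (b * (Q - 1 - m))"
    using card_image_le[of "{..<t} \<times> {..<b} \<times> S'" f1] fS cS by (simp add: card_cartesian_product)
  have c2: "card (f2 ` ({..<b} \<times> Bs)) \<le> b * m"
    using card_image_le[of "{..<b} \<times> Bs" f2] cB by (simp add: card_cartesian_product)
  have fin: "finite (f1 ` ({..<t} \<times> {..<b} \<times> S') \<union> f2 ` ({..<b} \<times> Bs) \<union> {0})"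
    using fS by simp
  have "card (f1 ` ({..<t} \<times> {..<b} \<times> S') \<union> f2 ` ({..<b} \<times> Bs) \<union> {0})
     \<le> card (f1 ` ({..<t} \<times> {..<b} \<times> S')) + card (f2 ` ({..<b} \<times> Bs)) + card {0::nat}"
    by (meson card_Un_le add_right_mono le_trans)
  then show ?thesis using card_mono[OF fin sub] finite_subset[OF sub fin] c1 c2 by simp
qed


lemma main_dim: "bvs.dim (alpha_map p m b t M ` V) \<le> t * (b * (Q - 1 - m)) + b * m + 1"
proof -
  let ?S = "alpha_map p m b t M ` V"
  define P where "P = (\<lambda>(y::nat \<Rightarrow> bit) n. if n \<in> Fset then y n else 0)"
  define \<delta> where "\<delta> = (\<lambda>n::nat. \<lambda>i::nat. if i = n then (1::bit) else 0)"
  have lin: "Vector_Spaces.linear bscale bscale P"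
    unfolding Vector_Spaces.linear_iff using bvs.vector_space_axioms
    by (auto simp: P_def bscale_def fun_eq_iff)
  have spanK: "bvs.span ?S \<subseteq> {y. Kp y}"
    by (rule bvs.span_minimal) (auto intro: Kp_alpha Kp_subspace)
  have inj: "inj_on P (bvs.span ?S)"
  proof -
    interpret lp: Vector_Spaces.linear bscale bscale P by (fact lin)
    show ?thesis
      unfolding lp.inj_on_iff_eq_0[OF bvs.subspace_span]
    proof (intro ballI impI)
      fix y assume y: "y \<in> bvs.span ?S" "P y = 0"
      have "Kp y" using spanK y(1) by auto
      moreover have "\<forall>n\<in>Fset. y n = 0"
      proof
        fix n assume "n \<in> Fset"
        then have "P y n = y n" by (simp add: P_def)
        then show "y n = 0" using y(2) by simp
      qed
      ultimately show "y = 0" by (rule kill)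
    qed
  qed
  have finF: "finite Fset" using Fset_card by simp
  have "bvs.dim ?S = bvs.dim (P ` ?S)" using dim_inj_image[OF lin inj] by simp
  also have "\<dots> \<le> card (\<delta> ` Fset)"
  proof (rule bvs.dim_le_card)
    show "finite (\<delta> ` Fset)" using finF by simp
    show "P ` ?S \<subseteq> bvs.span (\<delta> ` Fset)"
    proof
      fix z assume "z \<in> P ` ?S"
      then obtain y where z: "z = P y" by auto
      have "z = (\<Sum>n\<in>Fset. bscale (z n) (\<delta> n))"
      proof
        fix i
        have "(\<Sum>n\<in>Fset. bscale (z n) (\<delta> n)) i = (\<Sum>n\<in>Fset. z n * \<delta> n i)"
          by (simp add: sum_fun_apply bscale_def)
        also have "\<dots> = (\<Sum>n\<in>Fset. if i = n then z i else 0)"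
          by (rule sum.cong) (auto simp: \<delta>_def)
        also have "\<dots> = (if i \<in> Fset then z i else 0)"
          using finF by (simp add: sum.delta)
        also have "\<dots> = z i" by (simp add: z P_def)
        finally show "z i = (\<Sum>n\<in>Fset. bscale (z n) (\<delta> n)) i" by simp
      qed
      also have "\<dots> \<in> bvs.span (\<delta> ` Fset)"
        by (intro bvs.span_sum bvs.span_scale bvs.span_base) auto
      finally show "z \<in> bvs.span (\<delta> ` Fset)" .
    qed
  qed
  also have "\<dots> \<le> card Fset" using finF by (rule card_image_le)
  also have "\<dots> \<le> t * (b * (Q - 1 - m)) + b * m + 1" using Fset_card by simp
  finally show ?thesis .
qed

end

theorem mainTheorem9:
  fixes m b t :: nat and p :: "bit poly"
    and M :: "(nat \<Rightarrow> bit poly) \<Rightarrow> (nat \<Rightarrow> bit poly)"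
  assumes "m \<ge> 1" and "b \<ge> 1"
    and "primitive_poly m p"
    and M_maps: "\<forall>v\<in>gf_vecs p b. M v \<in> gf_vecs p b"
    and M_add: "\<forall>u\<in>gf_vecs p b. \<forall>v\<in>gf_vecs p b. M (u + v) = M u + M v"
    and M_smult: "\<forall>c\<in>gf_elems p. \<forall>v\<in>gf_vecs p b. M (gf_smult p c v) = gf_smult p c (M v)"
    and M_bij: "bij_betw M (gf_vecs p b) (gf_vecs p b)"
    and ord_t: "t \<ge> 1" "\<forall>v\<in>gf_vecs p b. (M ^^ t) v = v"
      "\<forall>s. 1 \<le> s \<and> s < t \<longrightarrow> (\<exists>v\<in>gf_vecs p b. (M ^^ s) v \<noteq> v)"
  shows "int (vector_space.dim bscale (alpha_map p m b t M ` gf_vecs p b))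
           \<le> int (2 ^ m * b * t) - (int (b * t) - 1) - int (m * b * (t - 1))"
proof -
  interpret setting m b t p M
    using assms(1,2,3) M_maps M_add ord_t(1) by unfold_locales auto
  have d: "bvs.dim (alpha_map p m b t M ` gf_vecs p b) \<le> t * (b * (2 ^ m - 1 - m)) + b * m + 1"
    by (rule main_dim)
  have "m < 2 ^ m" by (rule less_exp)
  then obtain q where q: "2 ^ m = q + m + 1" by (metis add.commute add_Suc_right less_imp_Suc_add add_Suc_shift plus_1_eq_Suc)
  obtain t' where tt: "t = t' + 1" using ord_t(1) by (metis le_add_diff_inverse2)
  have "int (t * (b * (2 ^ m - 1 - m)) + b * m + 1)
        = int (2 ^ m * b * t) - (int (b * t) - 1) - int (m * b * (t - 1))"
    unfolding q tt by (simp add: algebra_simps)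
  then show ?thesis using d by linarith
qed

end
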